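(* Let $(X,d)$ be a bounded metric space and $\lambda\ge0$. Let $\ell,k:X\to[0,+\infty)$ be lower semicontinuous functions with $\inf_X\ell=\inf_Xk=0$, and let $u,v:X\to\mathbb{R}$ be the Perron solutions of $(\mathcal{G}_\lambda)$ associated with $\ell$ and $k$, respectively. Then for every $\rho>0$, \[v(x)-u(x)\le(\rho+\|k-\ell\|_\infty)\,\mathrm{diam}(X)+\|k-\ell\|_\infty\frac{u(x)}{\rho}\quad\text{for all }x\in X.\]
   Context: $\mathrm{diam}(X)=\sup\{d(x,y):x,y\in X\}$; $\|f\|_\infty=\sup_X|f|$. Global slope: $G[u](x)=\sup_{y\neq x}\frac{(u(x)-u(y))_+}{d(x,y)}$ if $u(x)<+\infty$, $G[u](x)=+\infty$ otherwise. A solution of $(\mathcal{G}_\lambda)$ with data $\ell$ is a lower semicontinuous $u$ with $\inf_Xu=0$ and $\lambda u+G[u]=\ell$ on $X$; the Perron solution is the solution that is pointwise maximal among all solutions. *)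

theory Defs
  imports "HOL-Analysis.Analysis"
begin

definition lsc :: "('a::topological_space \<Rightarrow> real) \<Rightarrow> bool" where
  "lsc f \<longleftrightarrow> (\<forall>t. open {x. t < f x})"

text \<open>Global slope G[u](x) = sup over y \<noteq> x of (u x - u y)_+ / d(x,y), valued in ereal
  (it may be +\<infinity>); the supremum of the empty family of nonnegative reals is 0.\<close>
definition global_slope :: "('a::metric_space \<Rightarrow> real) \<Rightarrow> 'a \<Rightarrow> ereal" where
  "global_slope u x = Sup (insert 0 {ereal (max 0 (u x - u y) / dist x y) | y. y \<noteq> x})"

definition is_solution :: "real \<Rightarrow> ('a::metric_space \<Rightarrow> real) \<Rightarrow> ('a \<Rightarrow> real) \<Rightarrow> bool" where
  "is_solution lam l u \<longleftrightarrow> lsc u \<and> (INF x. ereal (u x)) = 0 \<and>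
     (\<forall>x. ereal (lam * u x) + global_slope u x = ereal (l x))"

definition is_perron_solution :: "real \<Rightarrow> ('a::metric_space \<Rightarrow> real) \<Rightarrow> ('a \<Rightarrow> real) \<Rightarrow> bool" where
  "is_perron_solution lam l u \<longleftrightarrow> is_solution lam l u \<and>
     (\<forall>w. is_solution lam l w \<longrightarrow> (\<forall>x. w x \<le> u x))"

definition sup_norm :: "('a \<Rightarrow> real) \<Rightarrow> ereal" where
  "sup_norm f = (SUP x. ereal \<bar>f x\<bar>)"

end

theory Submission
  imports Defs
begin


lemma inf0_iff:
  fixes g :: "'a \<Rightarrow> real"
  assumes "\<forall>x. 0 \<le> g x"
  shows "(INF x. ereal (g x)) = 0 \<longleftrightarrow> (\<forall>e>0. \<exists>x. g x < e)"
proof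
  assume h: "(INF x. ereal (g x)) = 0"
  show "\<forall>e>0. \<exists>x. g x < e"
  proof (intro allI impI)
    fix e :: real assume "e > 0"
    then have "(INF x. ereal (g x)) < ereal e" using h by simp
    then show "\<exists>x. g x < e" by (simp add: INF_less_iff)
  qed
next
  assume h: "\<forall>e>0. \<exists>x. g x < e"
  have "(INF x. ereal (g x)) \<ge> 0" using assms by (simp add: le_INF_iff)
  moreover have "(INF x. ereal (g x)) \<le> 0"
  proof (rule ereal_le_epsilon2)
    fix e :: real assume "e > 0"
    then obtain x where "g x < e" using h by blast
    then have "(INF x. ereal (g x)) \<le> ereal (g x)" by (intro INF_lower) simp
    also have "\<dots> \<le> 0 + ereal e" using \<open>g x < e\<close> by simp
    finally show "(INF x. ereal (g x)) \<le> 0 + ereal e" .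
  qed
  ultimately show "(INF x. ereal (g x)) = 0" by simp
qed

definition subsol :: "real \<Rightarrow> ('a::metric_space \<Rightarrow> real) \<Rightarrow> ('a \<Rightarrow> real) \<Rightarrow> bool" where
  "subsol lam l w \<longleftrightarrow> (\<forall>x. lam * w x \<le> l x \<and> (\<forall>y. w x - w y \<le> (l x - lam * w x) * dist x y))"

lemma slope_ge0: "0 \<le> global_slope u x"
  unfolding global_slope_def by (rule Sup_upper) simp

lemma slope_elem: "y \<noteq> x \<Longrightarrow> ereal (max 0 (u x - u y) / dist x y) \<le> global_slope u x"
  unfolding global_slope_def by (rule Sup_upper) blast

lemma slope_le:
  assumes "0 \<le> L" "\<And>y. y \<noteq> x \<Longrightarrow> u x - u y \<le> L * dist x y"
  shows "global_slope u x \<le> ereal L"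
  unfolding global_slope_def
proof (rule Sup_least)
  fix z assume "z \<in> insert 0 {ereal (max 0 (u x - u y) / dist x y) |y. y \<noteq> x}"
  then consider "z = 0" | y where "y \<noteq> x" "z = ereal (max 0 (u x - u y) / dist x y)" by blast
  then show "z \<le> ereal L"
  proof cases
    case 1 then show ?thesis using assms by simp
  next
    case 2
    have d: "dist x y > 0" using 2 by simp
    have "max 0 (u x - u y) \<le> L * dist x y" using assms(1) assms(2)[OF 2(1)] d by auto
    then have "max 0 (u x - u y) / dist x y \<le> L" using d by (simp add: divide_le_eq)
    then show ?thesis using 2 by simp
  qed
qed

lemma slope_real:
  assumes "ereal (lam * w x) + global_slope w x = ereal (l x)"
  shows "global_slope w x = ereal (l x - lam * w x)"
proof -
  have "global_slope w x \<noteq> \<infinity>" using assms by auto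
  moreover have "global_slope w x \<noteq> -\<infinity>" using slope_ge0[of w x] by auto
  ultimately obtain g where g: "global_slope w x = ereal g" by (cases "global_slope w x") auto
  then show ?thesis using assms by simp
qed

lemma sol_sub:
  assumes "is_solution lam l w"
  shows "subsol lam l w"
  unfolding subsol_def
proof (intro allI conjI)
  fix x
  have G: "global_slope w x = ereal (l x - lam * w x)"
    using assms slope_real unfolding is_solution_def by blast
  show "lam * w x \<le> l x" using slope_ge0[of w x] G by simp
  fix y
  show "w x - w y \<le> (l x - lam * w x) * dist x y"
  proof (cases "y = x")
    case True then show ?thesis by simp
  next
    case False
    have d: "dist x y > 0" using False by simp
    have "max 0 (w x - w y) / dist x y \<le> l x - lam * w x"
      using slope_elem[OF False, of w] G by simp
    then have "max 0 (w x - w y) \<le> (l x - lam * w x) * dist x y" using d by (simp add: divide_le_eq)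
    then show ?thesis by simp
  qed
qed

lemma sol_nonneg:
  assumes "is_solution lam l w" shows "0 \<le> w x"
proof -
  have "(INF x. ereal (w x)) \<le> ereal (w x)" by (rule INF_lower) simp
  then show ?thesis using assms unfolding is_solution_def by simp
qed

lemma sub_bound:
  fixes w l :: "'a::metric_space \<Rightarrow> real"
  assumes "subsol lam l w" "lam \<ge> 0" "\<forall>x. 0 \<le> w x" "(INF x. ereal (w x)) = 0"
    "bounded (UNIV :: 'a::metric_space set)"
  shows "w x \<le> l x * diameter (UNIV :: 'a set)"
proof -
  let ?D = "diameter (UNIV :: 'a set)"
  have L: "lam * w x \<le> l x" using assms(1) unfolding subsol_def by blast
  have "\<forall>e>0. \<exists>y. w y < e" using inf0_iff[of w] assms(3,4) by blast
  have key: "w x \<le> w y + l x * ?D" for y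
  proof -
    have d: "dist x y \<le> ?D" using assms(5) by (rule diameter_bounded_bound) auto
    have "w x - w y \<le> (l x - lam * w x) * dist x y" using assms(1) unfolding subsol_def by blast
    also have "\<dots> \<le> (l x - lam * w x) * ?D" using L d by (intro mult_left_mono) auto
    also have "\<dots> \<le> l x * ?D"
    proof -
      have "0 \<le> lam * w x" using assms(2,3) by simp
      moreover have "0 \<le> ?D" using d zero_le_dist[of x y] by linarith
      ultimately show ?thesis by (simp add: mult_right_mono)
    qed
    finally show ?thesis by simp
  qed
  show ?thesis
  proof (rule ccontr)
    assume "\<not> ?thesis"
    then have "w x - l x * ?D > 0" by simp
    then obtain y where "w y < w x - l x * ?D" using \<open>\<forall>e>0. \<exists>y. w y < e\<close> by blast
    then show False using key[of y] by simp
  qed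
qed


lemma perron_ge_sub:
  fixes l u w :: "'a::metric_space \<Rightarrow> real"
  assumes bnd: "bounded (UNIV::'a set)" and lam: "lam \<ge> 0" and l0: "\<forall>x. l x \<ge> 0"
    and lscl: "lsc l" and infl: "(INF x. ereal (l x)) = 0"
    and Dpos: "diameter (UNIV::'a set) > 0"
    and pu: "is_perron_solution lam l u"
    and w: "subsol lam l w" "\<forall>x. 0 \<le> w x" "\<forall>x. w x \<le> l x * diameter (UNIV::'a set)"
  shows "w x \<le> u x"
proof -
  define D where "D = diameter (UNIV::'a set)"
  have D: "D > 0" using Dpos D_def by simp
  have dD: "dist a b \<le> D" for a b :: 'a unfolding D_def using bnd by (rule diameter_bounded_bound) auto
  define C where "C = {f. subsol lam l f \<and> (\<forall>x. 0 \<le> f x) \<and> (\<forall>x. f x \<le> l x * D)}"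
  define S where "S z = Sup ((\<lambda>f. f z) ` C)" for z
  have wC: "w \<in> C" using w unfolding C_def D_def by blast
  have bdd: "bdd_above ((\<lambda>f. f z) ` C)" for z
    by (rule bdd_aboveI[of _ "l z * D"]) (auto simp: C_def)
  have upper: "f z \<le> S z" if "f \<in> C" for f z
    unfolding S_def using bdd that by (intro cSup_upper) auto
  have least: "S z \<le> c" if "\<And>f. f \<in> C \<Longrightarrow> f z \<le> c" for z c
    unfolding S_def using wC that by (intro cSup_least) auto
  have S0: "0 \<le> S z" for z using upper[OF wC, of z] w(2) by (metis order_trans)
  have SD: "S z \<le> l z * D" for z by (rule least) (auto simp: C_def)
  have Slam: "lam * S z \<le> l z" for z
  proof (cases "lam = 0")
    case True then show ?thesis using l0 by simp
  next
    case False
    then have lp: "lam > 0" using lam by simp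
    have "S z \<le> l z / lam"
    proof (rule least)
      fix f assume "f \<in> C"
      then have "lam * f z \<le> l z" unfolding C_def subsol_def by blast
      then show "f z \<le> l z / lam" using lp by (simp add: le_divide_eq mult.commute)
    qed
    then show ?thesis using lp by (simp add: le_divide_eq mult.commute)
  qed
  have Sdiff: "S z - S y \<le> (l z - lam * S z) * dist z y" for z y
  proof -
    let ?d = "dist z y"
    have pos: "1 + lam * ?d > 0" using lam by (simp add: add_pos_nonneg)
    have "S z \<le> (S y + l z * ?d) / (1 + lam * ?d)"
    proof (rule least)
      fix f assume fC: "f \<in> C"
      then have "f z - f y \<le> (l z - lam * f z) * ?d" unfolding C_def subsol_def by blast
      moreover have "f y \<le> S y" using upper[OF fC] .
      ultimately have "f z * (1 + lam * ?d) \<le> S y + l z * ?d" by (simp add: algebra_simps)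
      then show "f z \<le> (S y + l z * ?d) / (1 + lam * ?d)" using pos by (simp add: le_divide_eq)
    qed
    then have "S z * (1 + lam * ?d) \<le> S y + l z * ?d" using pos by (simp add: le_divide_eq)
    then show ?thesis by (simp add: algebra_simps)
  qed
  have subS: "subsol lam l S" unfolding subsol_def using Slam Sdiff by blast
  have SC: "S \<in> C" unfolding C_def using subS S0 SD by blast
  have smallS: "\<forall>e>0. \<exists>z. S z < e"
  proof (intro allI impI)
    fix e :: real assume e: "e > 0"
    have "\<forall>e>0. \<exists>x. l x < e" using inf0_iff[of l] l0 infl by blast
    then obtain z where "l z < e / D" using e D by (meson divide_pos_pos)
    then have "l z * D < e" using D by (simp add: less_divide_eq)
    then show "\<exists>z. S z < e" using SD[of z] by (intro exI[of _ z]) linarith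
  qed
  have infS: "(INF z. ereal (S z)) = 0" using inf0_iff[of S] S0 smallS by blast
  have lscS: "lsc S" unfolding lsc_def
  proof
    fix t
    show "open {z. t < S z}" unfolding open_dist
    proof
      fix z assume "z \<in> {z. t < S z}"
      then have tz: "t < S z" by simp
      define L where "L = l z - lam * S z"
      have L0: "L \<ge> 0" using Slam[of z] L_def by simp
      define e where "e = (S z - t) / (L + 1)"
      have e: "e > 0" using tz L0 e_def by simp
      have "t < S y" if "dist y z < e" for y
      proof -
        have "S z - S y \<le> L * dist z y" using Sdiff L_def by simp
        also have "\<dots> \<le> L * e" using that L0 by (simp add: dist_commute mult_left_mono)
        also have "\<dots> < S z - t"
        proof -
          have "L * e < (L + 1) * e" using e by simp
          also have "\<dots> = S z - t" using L0 e_def by simp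
          finally show ?thesis .
        qed
        finally show ?thesis by simp
      qed
      then show "\<exists>e>0. \<forall>y. dist y z < e \<longrightarrow> y \<in> {z. t < S z}" using e by auto
    qed
  qed
  have eqS: "ereal (lam * S z) + global_slope S z = ereal (l z)" for z
  proof -
    define L where "L = l z - lam * S z"
    have L0: "L \<ge> 0" using Slam[of z] L_def by simp
    have Gle: "global_slope S z \<le> ereal L"
      by (rule slope_le[OF L0]) (use Sdiff L_def in auto)
    have Gge: "global_slope S z \<ge> ereal L"
    proof (rule ccontr)
      assume "\<not> ?thesis"
      then have Glt: "global_slope S z < ereal L" by simp
      have "global_slope S z \<noteq> -\<infinity>" using slope_ge0[of S z] by auto
      moreover have "global_slope S z \<noteq> \<infinity>" using Glt by auto
      ultimately obtain g where g: "global_slope S z = ereal g" by (cases "global_slope S z") auto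
      have g0: "g \<ge> 0" using slope_ge0[of S z] g by simp
      have gL: "g < L" using Glt g by simp
      have Sxy: "S z - S y \<le> g * dist z y" for y
      proof (cases "y = z")
        case True then show ?thesis by simp
      next
        case False
        have d: "dist z y > 0" using False by simp
        have "max 0 (S z - S y) / dist z y \<le> g"
          using slope_elem[of y z S] False g by simp
        then have "max 0 (S z - S y) \<le> g * dist z y" using d by (simp add: divide_le_eq)
        then show ?thesis by simp
      qed
      define M where "M = (g + L) / 2"
      define \<eta> where "\<eta> = (L - g) / 2"
      have eta: "\<eta> > 0" using gL \<eta>_def by simp
      have M0: "M \<ge> 0" using g0 L0 M_def by simp
      have MgL: "M = g + \<eta>" "L = M + \<eta>" using M_def \<eta>_def by simp_all
      have "open {y. l z - \<eta>/2 < l y}" using lscl unfolding lsc_def by blast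
      moreover have "z \<in> {y. l z - \<eta>/2 < l y}" using eta by simp
      ultimately obtain r where r: "r > 0" "\<And>y. dist y z < r \<Longrightarrow> l z - \<eta>/2 < l y"
        unfolding open_dist by blast
      define \<delta> where "\<delta> = min (\<eta> / (2 * (lam + 1))) (min (r * \<eta> / 2) (\<eta> * D))"
      have \<delta>: "\<delta> > 0" using eta r D lam \<delta>_def by simp
      have lamdelta: "lam * \<delta> \<le> \<eta> / 2"
      proof -
        have "\<delta> \<le> \<eta> / (2 * (lam + 1))" unfolding \<delta>_def by (rule min.cobounded1)
        then have "\<delta> * (2 * (lam + 1)) \<le> \<eta>" using lam by (simp add: le_divide_eq)
        moreover have "lam * \<delta> * 2 \<le> \<delta> * (2 * (lam + 1))" using \<delta> by (simp add: algebra_simps)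
        ultimately show ?thesis by simp
      qed
      have deltar: "\<delta> / \<eta> < r"
      proof -
        have "\<delta> \<le> r * \<eta> / 2" unfolding \<delta>_def by (rule min.coboundedI2) simp
        also have "\<dots> < r * \<eta>" using r eta by simp
        finally show ?thesis using eta by (simp add: divide_less_eq)
      qed
      have deltaD: "\<delta> \<le> \<eta> * D" unfolding \<delta>_def by (rule min.coboundedI2) simp
      have SgD: "S z \<le> g * D"
      proof (rule ccontr)
        assume "\<not> ?thesis"
        then have "S z - g * D > 0" by simp
        then obtain y where y: "S y < S z - g * D" using smallS by blast
        have "g * dist z y \<le> g * D" using g0 dD by (simp add: mult_left_mono)
        then show False using Sxy[of y] y by simp
      qed
      have lzL: "l z \<ge> L" using L_def lam S0[of z] by simp
      define S' where "S' y = max (S y) (S z + \<delta> - M * dist y z)" for y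
      have region: "dist y z < r \<and> l z - \<eta>/2 < l y"
        if "S y < S z + \<delta> - M * dist y z" for y
      proof -
        have "S z - S y \<le> g * dist y z" using Sxy[of y] by (simp add: dist_commute)
        then have "\<eta> * dist y z < \<delta>" using that MgL by (simp add: algebra_simps)
        then have "dist y z < \<delta> / \<eta>" using eta by (simp add: less_divide_eq mult.commute)
        then have "dist y z < r" using deltar by simp
        then show ?thesis using r(2) by blast
      qed
      have cone_le: "S z + \<delta> - M * dist y z \<le> S z + \<delta>" for y using M0 by simp
      have S'C0: "(0 \<le> S' y \<and> S' y \<le> l y * D) \<and> (lam * S' y \<le> l y \<and> (\<forall>y'. S' y - S' y' \<le> (l y - lam * S' y) * dist y y'))" for y
      proof (rule conjI[OF conjI])
        show "0 \<le> S' y" using S0[of y] S'_def by simp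
        show "S' y \<le> l y * D"
        proof (cases "S y < S z + \<delta> - M * dist y z")
          case True
          then have ly: "l z - \<eta>/2 < l y" using region by blast
          have "S' y \<le> S z + \<delta>" using True cone_le[of y] S'_def by simp
          also have "\<dots> \<le> g * D + \<eta> * D" using SgD deltaD by simp
          also have "\<dots> = (g + \<eta>) * D" by (simp add: algebra_simps)
          also have "\<dots> \<le> (l z - \<eta>/2) * D" using lzL MgL D eta by (intro mult_right_mono) auto
          also have "\<dots> \<le> l y * D" using ly D by simp
          finally show ?thesis .
        next
          case False
          then show ?thesis using SD[of y] S'_def by simp
        qed
        show "lam * S' y \<le> l y \<and> (\<forall>y'. S' y - S' y' \<le> (l y - lam * S' y) * dist y y')"
        proof (cases "S y < S z + \<delta> - M * dist y z")
          case False
          then have eq: "S' y = S y" using S'_def by simp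
          have "S' y - S' y' \<le> (l y - lam * S' y) * dist y y'" for y'
          proof -
            have "S y' \<le> S' y'" using S'_def by simp
            then show ?thesis using Sdiff[of y y'] eq by simp
          qed
          then show ?thesis using Slam[of y] eq by simp
        next
          case True
          let ?c = "S z + \<delta> - M * dist y z"
          have eq: "S' y = ?c" using True S'_def by simp
          have ly: "l z - \<eta>/2 < l y" using region True by blast
          have cpos: "?c \<ge> 0" using True S0[of y] by simp
          have "lam * ?c \<le> lam * (S z + \<delta>)" using lam cone_le[of y] by (simp add: mult_left_mono)
          also have "\<dots> \<le> lam * S z + \<eta> / 2" using lamdelta by (simp add: algebra_simps)
          finally have lc: "lam * ?c \<le> lam * S z + \<eta> / 2" .
          have Mle: "M \<le> l y - lam * ?c" using lc ly L_def MgL by simp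
          have "S' y - S' y' \<le> (l y - lam * S' y) * dist y y'" for y'
          proof -
            have "S z + \<delta> - M * dist y' z \<le> S' y'" using S'_def by simp
            then have "S' y - S' y' \<le> M * (dist y' z - dist y z)" using eq by (simp add: algebra_simps)
            also have "\<dots> \<le> M * dist y y'"
              using M0 dist_triangle[of y' z y] by (intro mult_left_mono) (auto simp: dist_commute)
            also have "\<dots> \<le> (l y - lam * S' y) * dist y y'" using Mle eq by (simp add: mult_right_mono)
            finally show ?thesis .
          qed
          moreover have "lam * S' y \<le> l y" using Mle M0 eq by simp
          ultimately show ?thesis by blast
        qed
      qed
      have S'C: "S' \<in> C" unfolding C_def subsol_def using S'C0 by blast
      have "S' z \<le> S z" using upper[OF S'C] .
      moreover have "S' z \<ge> S z + \<delta>" using S'_def by simp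
      ultimately show False using \<delta> by simp
    qed
    have "global_slope S z = ereal L" using Gle Gge by simp
    then show ?thesis using L_def by simp
  qed
  have "is_solution lam l S" unfolding is_solution_def using lscS infS eqS by blast
  then have "S x \<le> u x" using pu unfolding is_perron_solution_def by blast
  moreover have "w x \<le> S x" using upper[OF wC] .
  ultimately show ?thesis by simp
qed


theorem lemma5p3:
  fixes lam :: real and l k u v :: "'a::metric_space \<Rightarrow> real"
  assumes "bounded (UNIV :: 'a set)"
    and "lam \<ge> 0"
    and "\<forall>x. l x \<ge> 0" and "\<forall>x. k x \<ge> 0"
    and "lsc l" and "lsc k"
    and "(INF x. ereal (l x)) = 0" and "(INF x. ereal (k x)) = 0"
    and "is_perron_solution lam l u" and "is_perron_solution lam k v"
  shows "\<forall>\<rho>>0. \<forall>x. ereal (v x - u x) \<le>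
            (ereal \<rho> + sup_norm (\<lambda>y. k y - l y)) * ereal (diameter (UNIV :: 'a set))
            + sup_norm (\<lambda>y. k y - l y) * ereal (u x / \<rho>)"
proof (intro allI impI)
  fix \<rho> :: real and x :: 'a
  assume rho: "\<rho> > 0"
  note bnd = assms(1) and lam = assms(2)
  define D where "D = diameter (UNIV :: 'a set)"
  define \<epsilon> where "\<epsilon> = sup_norm (\<lambda>y. k y - l y)"
  have dD: "dist a b \<le> D" for a b :: 'a unfolding D_def using bnd by (rule diameter_bounded_bound) auto
  have D0: "D \<ge> 0" using dD[of x x] by simp
  have solu: "is_solution lam l u" and solv: "is_solution lam k v"
    using assms(9,10) unfolding is_perron_solution_def by blast+
  have u0: "\<forall>z. 0 \<le> u z" using sol_nonneg[OF solu] by blast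
  have v0: "\<forall>z. 0 \<le> v z" using sol_nonneg[OF solv] by blast
  have subu: "subsol lam l u" using sol_sub[OF solu] .
  have subv: "subsol lam k v" using sol_sub[OF solv] .
  have infu: "(INF z. ereal (u z)) = 0" using solu unfolding is_solution_def by blast
  have infv: "(INF z. ereal (v z)) = 0" using solv unfolding is_solution_def by blast
  have smallu: "\<forall>e>0. \<exists>z. u z < e" using inf0_iff[of u] u0 infu by blast
  have smallv: "\<forall>e>0. \<exists>z. v z < e" using inf0_iff[of v] v0 infv by blast
  have eps_ge: "ereal \<bar>k y - l y\<bar> \<le> \<epsilon>" for y
    unfolding \<epsilon>_def sup_norm_def by (rule SUP_upper) simp
  have eps0: "\<epsilon> \<ge> 0" using eps_ge[of x] by (meson abs_ge_zero ereal_less_eq(5) order_trans)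
  have main: "ereal (v x - u x) \<le> (ereal \<rho> + \<epsilon>) * ereal D + \<epsilon> * ereal (u x / \<rho>)"
  proof (cases "D = 0")
    case True
    have same: "z = x" for z using dD[of z x] True by simp
    have "u x \<le> 0"
    proof (rule ccontr)
      assume "\<not> u x \<le> 0"
      then obtain z where "u z < u x" using smallu by force
      then show False using same[of z] by simp
    qed
    then have ux: "u x = 0" using u0 by (simp add: order_antisym)
    have "v x \<le> 0"
    proof (rule ccontr)
      assume "\<not> v x \<le> 0"
      then obtain z where "v z < v x" using smallv by force
      then show False using same[of z] by simp
    qed
    then have vx: "v x = 0" using v0 by (simp add: order_antisym)
    show ?thesis using ux vx True by (simp add: zero_ereal_def[symmetric])
  next
    case False
    then have Dp: "D > 0" using D0 by simp
    show ?thesis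
    proof (cases "\<epsilon> = \<infinity>")
      case True
      have "\<epsilon> * ereal (u x / \<rho>) \<ge> 0" using eps0 u0 rho by (simp add: ereal_zero_le_0_iff)
      then show ?thesis using True Dp by simp
    next
      case False
      then obtain e where e: "\<epsilon> = ereal e" using eps0 by (cases \<epsilon>) auto
      have e0: "e \<ge> 0" using eps0 e by simp
      have kl: "\<bar>k y - l y\<bar> \<le> e" for y using eps_ge[of y] e by simp
      define c where "c = (\<rho> + e) * D"
      define t where "t = \<rho> / (\<rho> + e)"
      have c0: "c > 0" using c_def rho e0 Dp by simp
      have t0: "t \<ge> 0" and t1: "t * (\<rho> + e) = \<rho>" using t_def rho e0 by auto
      define w where "w z = t * max 0 (v z - c)" for z
      have w0: "\<forall>z. 0 \<le> w z" using w_def t0 by simp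
      have winf: "(INF z. ereal (w z)) = 0"
      proof -
        have "\<forall>e'>0. \<exists>z. w z < e'"
        proof (intro allI impI)
          fix e' :: real assume "e' > 0"
          obtain z where "v z < c" using smallv c0 by blast
          then have "w z = 0" using w_def by simp
          then show "\<exists>z. w z < e'" using \<open>e' > 0\<close> by (intro exI[of _ z]) simp
        qed
        then show ?thesis using inf0_iff[of w] w0 by blast
      qed
      have subw: "subsol lam l w" unfolding subsol_def
      proof (intro allI)
        fix z
        show "lam * w z \<le> l z \<and> (\<forall>y. w z - w y \<le> (l z - lam * w z) * dist z y)"
        proof (cases "v z \<le> c")
          case True
          then have wz: "w z = 0" using w_def by simp
          have "w z - w y \<le> (l z - lam * w z) * dist z y" for y
            using wz w0 assms(3) by (simp add: mult_nonneg_nonneg) (smt (verit) zero_le_dist mult_nonneg_nonneg)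
          then show ?thesis using wz assms(3) by simp
        next
          case False
          then have wz: "w z = t * (v z - c)" using w_def c0 by simp
          have "v z \<le> k z * D" using sub_bound[OF subv lam v0 infv bnd] D_def by simp
          then have "(\<rho> + e) * D < k z * D" using False c_def by simp
          then have kz: "\<rho> + e < k z" using Dp by simp
          have lz: "l z \<ge> k z - e" using kl[of z] by simp
          then have lzr: "l z \<ge> \<rho>" using kz by simp
          have tk: "t * k z \<le> l z"
          proof -
            have "(\<rho> + e) * (t * k z) = (t * (\<rho> + e)) * k z" by (simp add: algebra_simps)
            also have "\<dots> = \<rho> * k z" using t1 by simp
            finally have "(\<rho> + e) * (t * k z) = \<rho> * k z" .
            also have "\<dots> \<le> \<rho> * (l z + e)" using lz rho by (simp add: mult_left_mono)
            also have "\<dots> = \<rho> * l z + \<rho> * e" by (simp add: algebra_simps)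
            also have "\<dots> \<le> \<rho> * l z + e * l z" using lzr e0 mult_left_mono[OF lzr e0] by (simp add: mult.commute)
            also have "\<dots> = (\<rho> + e) * l z" by (simp add: algebra_simps)
            finally show ?thesis using rho e0
              by (smt (verit) mult_le_cancel_left_pos)
          qed
          have lamv: "lam * v z \<le> k z" using subv unfolding subsol_def by blast
          have Lw: "t * (k z - lam * v z) \<le> l z - lam * w z"
          proof -
            have "t * lam * c \<ge> 0" using t0 lam c0 by simp
            moreover have "lam * w z = t * lam * v z - t * lam * c" unfolding wz by (simp add: right_diff_distrib)
            moreover have "t * (k z - lam * v z) = t * k z - t * lam * v z" by (simp add: algebra_simps)
            ultimately show ?thesis using tk by linarith
          qed
          have "w z - w y \<le> (l z - lam * w z) * dist z y" for y
          proof -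
            have "w y \<ge> t * (v y - c)" using w_def t0 by (simp add: mult_left_mono)
            then have "w z - w y \<le> t * (v z - v y)" using wz by (simp add: algebra_simps)
            also have "\<dots> \<le> t * ((k z - lam * v z) * dist z y)"
              using subv t0 unfolding subsol_def by (simp add: mult_left_mono)
            also have "\<dots> = (t * (k z - lam * v z)) * dist z y" by simp
            also have "\<dots> \<le> (l z - lam * w z) * dist z y" using Lw by (simp add: mult_right_mono)
            finally show ?thesis .
          qed
          moreover have "lam * w z \<le> l z"
          proof -
            have "t * lam * v z \<le> t * k z" using lamv t0 by (simp add: mult_left_mono mult.assoc)
            moreover have "t * lam * c \<ge> 0" using c0 t0 lam by simp
            moreover have "lam * w z = t * lam * v z - t * lam * c" unfolding wz by (simp add: right_diff_distrib)
            ultimately show ?thesis using tk by linarith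
          qed
          ultimately show ?thesis by blast
        qed
      qed
      have wb: "\<forall>z. w z \<le> l z * diameter (UNIV :: 'a set)"
        using sub_bound[OF subw lam w0 winf bnd] by blast
      have wu: "w x \<le> u x"
        by (rule perron_ge_sub[OF bnd lam assms(3) assms(5) assms(7) _ assms(9) subw w0 wb])
           (use Dp D_def in simp)
      have real: "v x - u x \<le> (\<rho> + e) * D + e * (u x / \<rho>)"
      proof (cases "v x \<le> c")
        case True
        have "e * (u x / \<rho>) \<ge> 0" using e0 u0 rho by simp
        then show ?thesis using True u0 c_def by (smt (verit))
      next
        case False
        then have "t * (v x - c) \<le> u x" using wu w_def by simp
        then have "(\<rho> + e) * (t * (v x - c)) \<le> (\<rho> + e) * u x" using rho e0 by (simp add: mult_left_mono)
        moreover have "(\<rho> + e) * (t * (v x - c)) = (t * (\<rho> + e)) * (v x - c)" by (simp add: algebra_simps)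
        ultimately have "\<rho> * (v x - c) \<le> (\<rho> + e) * u x" using t1 by simp
        then have "v x - c \<le> (\<rho> + e) * u x / \<rho>" using rho by (simp add: le_divide_eq mult.commute)
        also have "\<dots> = u x + e * (u x / \<rho>)" using rho by (simp add: field_simps)
        finally show ?thesis using c_def by simp
      qed
      show ?thesis using real e by simp
    qed
  qed
  then show "ereal (v x - u x) \<le> (ereal \<rho> + sup_norm (\<lambda>y. k y - l y)) * ereal (diameter (UNIV :: 'a set))
            + sup_norm (\<lambda>y. k y - l y) * ereal (u x / \<rho>)" unfolding \<epsilon>_def D_def .
qed

end
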